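(* Let $q \ge 2$, $n$, $a$, $b$ be nonnegative integers with $b \ge 1$ and $a + qb \le n - 1$. Then $\kappa^*(A_{q,n,a,b}) \le \kappa^*(A_{q,n,a+2,b-1})$.
   Context: For integers $q \ge 2$, $n \ge 1$, $0 \le a \le n$, $b \ge 0$, the $q$-ary $n$-symbol $a$-erasure $b$-substitution channel $A_{q,n,a,b}$ has input set $[q]^n$ (where $[q]=\{0,\dots,q-1\}$) and output set the strings $y \in ([q]\cup\{*\})^n$ having exactly $a$ positions equal to the erasure symbol $*$; $(A_{q,n,a,b})_{x,y} = 1$ iff $|\{i : y_i \ne *,\ y_i \ne x_i\}| \le b$. For a $0/1$ matrix $A \in \{0,1\}^{X\times Y}$, $\kappa^*(A) = \min\{\mathbf{1}^T z : z\in \mathbb{R}^Y,\ z\ge\mathbf{0},\ Az\ge\mathbf{1}\}$. *)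

theory Defs
  imports Complex_Main
begin

definition kappa_star :: "'x set \<Rightarrow> 'y set \<Rightarrow> ('x \<Rightarrow> 'y \<Rightarrow> bool) \<Rightarrow> real" where
  "kappa_star X Y A = Inf {(\<Sum>y\<in>Y. z y) | z :: 'y \<Rightarrow> real.
      (\<forall>y\<in>Y. z y \<ge> 0) \<and> (\<forall>x\<in>X. (\<Sum>y\<in>Y. if A x y then z y else 0) \<ge> 1)}"

definition chan_inputs :: "nat \<Rightarrow> nat \<Rightarrow> nat list set" where
  "chan_inputs q n = {x. length x = n \<and> (\<forall>i<n. x ! i < q)}"

text \<open>Outputs: words in ([q] \<union> {*})^n with exactly a erasures; the erasure symbol * is None.\<close>
definition chan_outputs :: "nat \<Rightarrow> nat \<Rightarrow> nat \<Rightarrow> nat option list set" where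
  "chan_outputs q n a = {y. length y = n \<and> (\<forall>i<n. \<forall>v. y ! i = Some v \<longrightarrow> v < q)
      \<and> card {i. i < n \<and> y ! i = None} = a}"

definition chan_entry :: "nat \<Rightarrow> nat \<Rightarrow> nat list \<Rightarrow> nat option list \<Rightarrow> bool" where
  "chan_entry n b x y = (card {i. i < n \<and> y ! i \<noteq> None \<and> y ! i \<noteq> Some (x ! i)} \<le> b)"

definition kappa_chan :: "nat \<Rightarrow> nat \<Rightarrow> nat \<Rightarrow> nat \<Rightarrow> real" where
  "kappa_chan q n a b = kappa_star (chan_inputs q n) (chan_outputs q n a) (chan_entry n b)"

end

theory Submission imports Defs "HOL-Library.FuncSet" begin

lemma card_lists_nth:
  "card {xs. length xs = n \<and> (\<forall>i<n. xs!i \<in> F i)} = (\<Prod>i<n. card (F i))"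
proof -
  have "bij_betw (\<lambda>xs. restrict (\<lambda>i. xs!i) {..<n}) {xs. length xs = n \<and> (\<forall>i<n. xs!i \<in> F i)} (PiE {..<n} F)"
  proof (rule bij_betwI')
    fix x y assume "x \<in> {xs. length xs = n \<and> (\<forall>i<n. xs!i \<in> F i)}" "y \<in> {xs. length xs = n \<and> (\<forall>i<n. xs!i \<in> F i)}"
    then show "(restrict ((!) x) {..<n} = restrict ((!) y) {..<n}) = (x = y)"
      by (auto simp: restrict_def fun_eq_iff intro: nth_equalityI)
  next
    fix x assume "x \<in> {xs. length xs = n \<and> (\<forall>i<n. xs!i \<in> F i)}"
    then show "restrict ((!) x) {..<n} \<in> PiE {..<n} F" by auto
  next
    fix f assume f: "f \<in> PiE {..<n} F"
    show "\<exists>x\<in>{xs. length xs = n \<and> (\<forall>i<n. xs!i \<in> F i)}. f = restrict ((!) x) {..<n}"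
      apply (rule bexI[of _ "map f [0..<n]"])
      using f by (auto simp: fun_eq_iff PiE_def extensional_def)
  qed
  then have "card {xs. length xs = n \<and> (\<forall>i<n. xs!i \<in> F i)} = card (PiE {..<n} F)"
    by (rule bij_betw_same_card)
  also have "\<dots> = (\<Prod>i<n. card (F i))" by (simp add: card_PiE)
  finally show ?thesis .
qed

definition Vb :: "nat \<Rightarrow> nat \<Rightarrow> nat \<Rightarrow> nat" where
  "Vb q m k = (\<Sum>j\<le>k. (m choose j) * (q-1)^j)"

lemma sum_card_subsets:
  assumes "finite N"
  shows "(\<Sum>D\<in>{D. D \<subseteq> N \<and> card D \<le> k}. h (card D)) = (\<Sum>j\<le>k. (card N choose j) * (h j :: nat))"
proof -
  have eq: "{D. D \<subseteq> N \<and> card D \<le> k} = (\<Union>j\<in>{..k}. {D. D \<subseteq> N \<and> card D = j})" by auto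
  have fin: "\<And>j. finite {D. D \<subseteq> N \<and> card D = j}"
    using assms by (auto intro: finite_subset[of _ "Pow N"])
  have "(\<Sum>D\<in>{D. D \<subseteq> N \<and> card D \<le> k}. h (card D)) = (\<Sum>j\<le>k. \<Sum>D\<in>{D. D \<subseteq> N \<and> card D = j}. h (card D))"
    unfolding eq by (rule sum.UNION_disjoint) (auto simp: fin)
  also have "\<dots> = (\<Sum>j\<le>k. (card N choose j) * h j)"
    by (rule sum.cong, simp) (simp add: n_subsets[OF assms])
  finally show ?thesis .
qed

lemma count_ball:
  fixes N :: "nat set"
  assumes N: "N \<subseteq> {..<n}" and g: "\<forall>i\<in>N. g i < q"
  shows "card {xs. length xs = n \<and> (\<forall>i<n. xs!i < q) \<and> card {i\<in>N. xs!i \<noteq> g i} \<le> k}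
     = q^(n - card N) * Vb q (card N) k"
proof -
  have finN: "finite N" using N finite_subset by blast
  define A where "A = {xs. length xs = n \<and> (\<forall>i<n. xs!i < q)}"
  define Ds where "Ds = {D. D \<subseteq> N \<and> card D \<le> k}"
  define F where "F D i = (if i \<in> D then {..<q} - {g i} else if i \<in> N then {g i} else {..<q})" for D i
  define fib where "fib D = {xs\<in>A. {i\<in>N. xs!i \<noteq> g i} = D}" for D
  have fibeq: "fib D = {xs. length xs = n \<and> (\<forall>i<n. xs!i \<in> F D i)}" if "D \<subseteq> N" for D
    using that N g unfolding fib_def A_def F_def
    by (auto split: if_splits)
  have finA: "finite A"
    apply (rule finite_subset[OF _ finite_lists_length_eq[of "{..<q}" n]])
    by (auto simp: A_def in_set_conv_nth)
  have setq: "{xs\<in>A. card {i\<in>N. xs!i \<noteq> g i} \<le> k} = (\<Union>D\<in>Ds. fib D)"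
    unfolding Ds_def fib_def by auto
  have cardfib: "card (fib D) = (q-1)^card D * q^(n - card N)" if D: "D \<subseteq> N" for D
  proof -
    have "card (fib D) = (\<Prod>i<n. card (F D i))" using fibeq[OF D] card_lists_nth by simp
    also have "\<dots> = (\<Prod>i<n. if i \<in> D then q - 1 else if i \<in> N then 1 else q)"
      apply (rule prod.cong, simp) using g D by (auto simp: F_def)
    also have "\<dots> = (\<Prod>i\<in>{..<n} \<inter> D. q - 1) * (\<Prod>i\<in>{..<n} - D. if i \<in> N then 1 else q)"
      by (simp add: prod.If_cases Diff_eq)
    also have "(\<Prod>i\<in>{..<n} - D. if i \<in> N then 1 else q) = (\<Prod>i\<in>({..<n} - D) \<inter> N. 1) * (\<Prod>i\<in>({..<n} - D) - N. q)"
      by (simp add: prod.If_cases Diff_eq)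
    also have "({..<n} - D) - N = {..<n} - N" using D by auto
    also have "{..<n} \<inter> D = D" using D N by auto
    finally show ?thesis using finN D N by (simp add: card_Diff_subset finite_subset)
  qed
  have "card {xs\<in>A. card {i\<in>N. xs!i \<noteq> g i} \<le> k} = (\<Sum>D\<in>Ds. card (fib D))"
    unfolding setq
    apply (rule card_UN_disjoint)
    using finN finA by (auto simp: Ds_def fib_def intro: finite_subset[of _ "Pow N"])
  also have "\<dots> = (\<Sum>D\<in>Ds. q^(n - card N) * (q-1)^card D)"
    by (rule sum.cong) (auto simp: Ds_def cardfib)
  also have "\<dots> = q^(n - card N) * Vb q (card N) k"
    unfolding Ds_def Vb_def sum_distrib_left[symmetric]
    using sum_card_subsets[OF finN, where k=k and h="\<lambda>j. (q-1)^j"] by simp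
  finally show ?thesis unfolding A_def by (simp add: conj_assoc)
qed


definition Vp :: "nat \<Rightarrow> nat \<Rightarrow> nat \<Rightarrow> nat" where
  "Vp p m k = (\<Sum>j\<le>k. (m choose j) * p^j)"

lemma Vb_Vp: "Vb q m k = Vp (q-1) m k" by (simp add: Vb_def Vp_def)

lemma Vp_Suc_k: "Vp p m (Suc k) = Vp p m k + (m choose Suc k) * p^Suc k"
  by (simp add: Vp_def)

lemma Vp_0: "Vp p m 0 = 1" by (simp add: Vp_def)

lemma Vb_pos: "Vb q m k \<ge> 1"
  unfolding Vb_Vp by (induction k) (auto simp: Vp_0 Vp_Suc_k)

lemma Vp_Suc: "Vp p (Suc M) (Suc k) = Vp p M (Suc k) + p * Vp p M k"
proof (induction k)
  case 0
  then show ?case by (simp add: Vp_def)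
next
  case (Suc k)
  have "Vp p (Suc M) (Suc (Suc k)) = Vp p (Suc M) (Suc k) + (Suc M choose Suc (Suc k)) * p^Suc (Suc k)"
    by (rule Vp_Suc_k)
  also have "\<dots> = Vp p M (Suc k) + p * Vp p M k + ((M choose Suc (Suc k)) + (M choose Suc k)) * p^Suc (Suc k)"
    using Suc by simp
  also have "\<dots> = Vp p M (Suc (Suc k)) + p * Vp p M (Suc k)"
    by (simp add: Vp_Suc_k algebra_simps)
  finally show ?case .
qed

lemma Vb_ineq:
  assumes q: "q \<ge> 1" and c: "q * Suc c \<le> M + 1"
  shows "q^2 * Vb q M c \<le> Vb q (Suc (Suc M)) (Suc c)"
proof -
  define p where "p = q - 1"
  have qp: "q = p + 1" using q p_def by simp
  show ?thesis unfolding Vb_Vp p_def[symmetric]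
  proof (cases c)
    case 0
    have "p \<le> M" using c 0 qp by simp
    then have "p*p \<le> M * p" by simp
    then show "q\<^sup>2 * Vp p M c \<le> Vp p (Suc (Suc M)) (Suc c)"
      using 0 by (simp add: Vp_def qp power2_eq_square algebra_simps)
  next
    case (Suc d)
    have e1: "Vp p (Suc (Suc M)) (Suc c) = Vp p M (d+2) + 2*p*Vp p M (d+1) + p*p*Vp p M d"
      unfolding Suc using Vp_Suc[of p "Suc M"] Vp_Suc[of p M]
      by (simp add: algebra_simps numeral_2_eq_2)
    have key: "p * (M choose (d+1)) \<le> M choose (d+2)"
    proof -
      have a: "(M choose (d+2)) * (d+2) = (M choose (d+1)) * (M - (d+1))"
        by (metis Suc_1 add_Suc_right binomial_absorb_comp binomial_absorption mult.commute
             plus_1_eq_Suc)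
      have b: "p * (d+2) \<le> M - (d+1)" using c Suc qp by (simp add: algebra_simps)
      have "p * (M choose (d+1)) * (d+2) \<le> (M choose (d+2)) * (d+2)"
        using a mult_le_mono2[OF b, of "M choose (d+1)"] by (simp add: algebra_simps)
      then show ?thesis by (subst (asm) mult_le_cancel2) simp
    qed
    have "Vp p M (d+2) = Vp p M (d+1) + (M choose (d+2)) * p^(d+2)"
      using Vp_Suc_k[of p M "d+1"] by simp
    moreover have "Vp p M (d+1) = Vp p M d + (M choose (d+1)) * p^(d+1)"
      using Vp_Suc_k[of p M "d"] by simp
    moreover have "p*p*((M choose (d+1)) * p^(d+1)) \<le> (M choose (d+2)) * p^(d+2)"
      using mult_le_mono1[OF key, of "p^(d+1)"] by (simp add: algebra_simps)
    ultimately have "(p+1)*(p+1) * Vp p M (d+1) \<le> Vp p M (d+2) + 2*p*Vp p M (d+1) + p*p*Vp p M d"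
    proof -
      fix A0 t1 t2 :: nat
      have gen: "\<And>A0 t1 t2 :: nat. p*p*t1 \<le> t2 \<Longrightarrow> (p+1)*(p+1)*(A0+t1) \<le> (A0+t1+t2) + 2*p*(A0+t1) + p*p*A0"
        by (simp add: algebra_simps)
      assume h1: "Vp p M (d+2) = Vp p M (d+1) + (M choose (d+2)) * p^(d+2)"
        and h2: "Vp p M (d+1) = Vp p M d + (M choose (d+1)) * p^(d+1)"
        and h3: "p*p*((M choose (d+1)) * p^(d+1)) \<le> (M choose (d+2)) * p^(d+2)"
      show ?thesis unfolding h1 unfolding h2 using gen[OF h3] by simp
    qed
    then show "q\<^sup>2 * Vp p M c \<le> Vp p (Suc (Suc M)) (Suc c)" unfolding e1 qp
      using Suc by (simp add: power2_eq_square)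
  qed
qed


lemma finite_inputs: "finite (chan_inputs q n)"
  apply (rule finite_subset[OF _ finite_lists_length_eq[of "{..<q}" n]])
  by (auto simp: chan_inputs_def in_set_conv_nth)

lemma finite_outputs: "finite (chan_outputs q n e)"
proof (rule finite_subset[OF _ finite_lists_length_eq[of "insert None (Some ` {..<q})" n]])
  show "chan_outputs q n e \<subseteq> {xs. set xs \<subseteq> insert None (Some ` {..<q}) \<and> length xs = n}"
  proof
    fix y assume y: "y \<in> chan_outputs q n e"
    have "set y \<subseteq> insert None (Some ` {..<q})"
    proof
      fix v assume "v \<in> set y"
      then obtain i where i: "i < length y" "y!i = v" by (auto simp: in_set_conv_nth)
      then show "v \<in> insert None (Some ` {..<q})" using y
        by (cases v) (auto simp: chan_outputs_def)
    qed
    then show "y \<in> {xs. set xs \<subseteq> insert None (Some ` {..<q}) \<and> length xs = n}"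
      using y by (auto simp: chan_outputs_def)
  qed
qed auto

lemma card_inputs: "card (chan_inputs q n) = q^n"
  using card_lists_nth[of n "\<lambda>_. {..<q}"] by (simp add: chan_inputs_def)

lemma col_count:
  assumes y: "y \<in> chan_outputs q n e"
  shows "card {x \<in> chan_inputs q n. chan_entry n k x y} = q^e * Vb q (n-e) k"
proof -
  define N where "N = {i. i<n \<and> y!i \<noteq> None}"
  define g where "g i = the (y!i)" for i
  have N: "N \<subseteq> {..<n}" by (auto simp: N_def)
  have gq: "\<forall>i\<in>N. g i < q" using y by (auto simp: N_def g_def chan_outputs_def)
  have cardN: "card N = n - e"
  proof -
    have "{..<n} = N \<union> {i. i<n \<and> y!i = None}" by (auto simp: N_def)
    moreover have "N \<inter> {i. i<n \<and> y!i = None} = {}" by (auto simp: N_def)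
    ultimately have "n = card N + card {i. i<n \<and> y!i = None}"
      by (metis card_Un_disjoint card_lessThan finite_Un finite_lessThan)
    then show ?thesis using y by (simp add: chan_outputs_def)
  qed
  have e: "e \<le> n"
  proof -
    have "card {i. i<n \<and> y!i = None} \<le> card {..<n}" by (rule card_mono) auto
    then show ?thesis using y by (simp add: chan_outputs_def)
  qed
  have "{x \<in> chan_inputs q n. chan_entry n k x y} =
     {xs. length xs = n \<and> (\<forall>i<n. xs!i < q) \<and> card {i\<in>N. xs!i \<noteq> g i} \<le> k}"
  proof -
    have "{i. i < n \<and> y ! i \<noteq> None \<and> y ! i \<noteq> Some (x ! i)} = {i\<in>N. x!i \<noteq> g i}" for x
      by (auto simp: N_def g_def)
    then show ?thesis by (auto simp: chan_inputs_def chan_entry_def)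
  qed
  also have "card \<dots> = q^(n - card N) * Vb q (card N) k" by (rule count_ball[OF N gq])
  finally show ?thesis using cardN e by simp
qed


lemma lower_bound:
  assumes e: "e \<le> n" and q: "q \<ge> 1"
    and nn: "\<forall>y\<in>chan_outputs q n e. z y \<ge> 0"
    and cov: "\<forall>x\<in>chan_inputs q n. (\<Sum>y\<in>chan_outputs q n e. if chan_entry n k x y then z y else 0) \<ge> (1::real)"
  shows "real (q^(n-e)) / real (Vb q (n-e) k) \<le> (\<Sum>y\<in>chan_outputs q n e. z y)"
proof -
  let ?X = "chan_inputs q n" and ?Y = "chan_outputs q n e"
  define C where "C = real (q^e * Vb q (n-e) k)"
  have Cpos: "C > 0" using Vb_pos[of q "n-e" k] q by (simp add: C_def)
  have "real (q^n) = (\<Sum>x\<in>?X. (1::real))" by (simp add: card_inputs)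
  also have "\<dots> \<le> (\<Sum>x\<in>?X. \<Sum>y\<in>?Y. if chan_entry n k x y then z y else 0)"
    by (rule sum_mono) (use cov in auto)
  also have "\<dots> = (\<Sum>y\<in>?Y. \<Sum>x\<in>?X. if chan_entry n k x y then z y else 0)"
    by (rule sum.swap)
  also have "\<dots> = (\<Sum>y\<in>?Y. z y * C)"
  proof (rule sum.cong, simp)
    fix y assume y: "y \<in> ?Y"
    have "(\<Sum>x\<in>?X. if chan_entry n k x y then z y else 0) = (\<Sum>x\<in>{x\<in>?X. chan_entry n k x y}. z y)"
      by (rule sum.inter_filter[symmetric]) (rule finite_inputs)
    also have "\<dots> = z y * C" using col_count[OF y, of k] by (simp add: C_def)
    finally show "(\<Sum>x\<in>?X. if chan_entry n k x y then z y else 0) = z y * C" .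
  qed
  also have "\<dots> = C * (\<Sum>y\<in>?Y. z y)" by (simp add: sum_distrib_left mult.commute)
  finally have h: "real (q^n) \<le> C * (\<Sum>y\<in>?Y. z y)" .
  have qn: "real q ^ n = real q ^ e * real q ^ (n-e)"
    using e by (simp add: power_add[symmetric])
  have qe: "real q ^ e \<noteq> 0" using q by simp
  have "real (q^(n-e)) / real (Vb q (n-e) k) = real (q^n) / C"
    using q qe by (simp add: C_def qn)
  also have "\<dots> \<le> (\<Sum>y\<in>?Y. z y)" using h Cpos by (simp add: divide_le_eq mult.commute)
  finally show ?thesis .
qed

lemma upper_witness:
  assumes e: "e \<le> n"
  shows "\<exists>z. (\<forall>y\<in>chan_outputs q n e. z y \<ge> 0) \<and>
    (\<forall>x\<in>chan_inputs q n. (\<Sum>y\<in>chan_outputs q n e. if chan_entry n k x y then z y else 0) \<ge> (1::real)) \<and>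
    (\<Sum>y\<in>chan_outputs q n e. z y) = real (q^(n-e)) / real (Vb q (n-e) k)"
proof -
  let ?X = "chan_inputs q n" and ?Y = "chan_outputs q n e"
  define m where "m = n - e"
  define W where "W = chan_inputs q m"
  define f where "f w = replicate e None @ map Some w" for w :: "nat list"
  define Fam where "Fam = f ` W"
  define c where "c = 1 / real (Vb q m k)"
  define z where "z y = (if y \<in> Fam then c else 0)" for y
  have Vpos: "real (Vb q m k) > 0" using Vb_pos[of q m k] by simp
  have inj: "inj_on f W"
    by (rule inj_onI) (auto simp: f_def inj_map_eq_map inj_def)
  have nthf: "f w ! i = (if i < e then None else Some (w ! (i - e)))" if "i < e + length w" for w i
    using that by (auto simp: f_def nth_append)
  have FamY: "Fam \<subseteq> ?Y"
  proof
    fix y assume "y \<in> Fam"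
    then obtain w where w: "w \<in> W" "y = f w" by (auto simp: Fam_def)
    have lw: "length w = m" using w by (simp add: W_def chan_inputs_def)
    have "{i. i < n \<and> y!i = None} = {..<e}"
      using w lw e nthf[of _ w] by (auto simp: m_def split: if_splits)
    then show "y \<in> ?Y" using w lw e nthf[of _ w]
      by (auto simp: chan_outputs_def f_def W_def chan_inputs_def m_def)
  qed
  have finY: "finite ?Y" by (rule finite_outputs)
  have cardW: "card W = q^m" by (simp add: W_def card_inputs)
  have s1: "(\<Sum>y\<in>?Y. z y) = real (q^m) * c"
  proof -
    have "(\<Sum>y\<in>?Y. z y) = (\<Sum>y\<in>{y\<in>?Y. y \<in> Fam}. c)"
      unfolding z_def by (rule sum.inter_filter[symmetric, OF finY])
    also have "{y\<in>?Y. y \<in> Fam} = Fam" using FamY by auto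
    finally have "(\<Sum>y\<in>?Y. z y) = (\<Sum>y\<in>Fam. c)" .
    moreover have "card Fam = q^m" using card_image[OF inj] cardW by (simp add: Fam_def)
    ultimately show ?thesis by simp
  qed
  have cov: "(\<Sum>y\<in>?Y. if chan_entry n k x y then z y else 0) \<ge> 1" if x: "x \<in> ?X" for x
  proof -
    have lx: "length x = n" "\<forall>i<n. x!i < q" using x by (auto simp: chan_inputs_def)
    define Wk where "Wk = {w. length w = m \<and> (\<forall>i<m. w!i < q) \<and> card {j\<in>{..<m}. w!j \<noteq> x!(j+e)} \<le> k}"
    have cWk: "card Wk = Vb q m k"
      using count_ball[of "{..<m}" m "\<lambda>j. x!(j+e)" q k] lx by (simp add: Wk_def m_def)
    have ent: "chan_entry n k x (f w) \<longleftrightarrow> card {j\<in>{..<m}. w!j \<noteq> x!(j+e)} \<le> k" if w: "w \<in> W" for w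
    proof -
      have lw: "length w = m" using w by (simp add: W_def chan_inputs_def)
      have "{i. i < n \<and> f w ! i \<noteq> None \<and> f w ! i \<noteq> Some (x ! i)} = (\<lambda>j. j+e) ` {j\<in>{..<m}. w!j \<noteq> x!(j+e)}"
      proof (rule set_eqI, rule iffI)
        fix i assume "i \<in> {i. i < n \<and> f w ! i \<noteq> None \<and> f w ! i \<noteq> Some (x ! i)}"
        then show "i \<in> (\<lambda>j. j+e) ` {j\<in>{..<m}. w!j \<noteq> x!(j+e)}"
          using nthf[of i w] lw e
          by (auto simp: m_def split: if_splits intro!: image_eqI[of _ _ "i - e"])
      next
        fix i assume "i \<in> (\<lambda>j. j+e) ` {j\<in>{..<m}. w!j \<noteq> x!(j+e)}"
        then show "i \<in> {i. i < n \<and> f w ! i \<noteq> None \<and> f w ! i \<noteq> Some (x ! i)}"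
          using lw e by (auto simp: m_def nthf)
      qed
      moreover have "card ((\<lambda>j. j+e) ` {j\<in>{..<m}. w!j \<noteq> x!(j+e)}) = card {j\<in>{..<m}. w!j \<noteq> x!(j+e)}"
        by (rule card_image) (auto simp: inj_on_def)
      ultimately show ?thesis by (simp add: chan_entry_def)
    qed
    have "(\<Sum>y\<in>?Y. if chan_entry n k x y then z y else 0) = (\<Sum>y\<in>?Y. if y \<in> Fam \<and> chan_entry n k x y then c else 0)"
      by (rule sum.cong) (auto simp: z_def)
    also have "\<dots> = (\<Sum>y\<in>{y\<in>?Y. y \<in> Fam \<and> chan_entry n k x y}. c)"
      by (rule sum.inter_filter[symmetric, OF finY])
    also have "{y\<in>?Y. y \<in> Fam \<and> chan_entry n k x y} = f ` Wk"
    proof -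
      have "Wk = {w\<in>W. card {j\<in>{..<m}. w!j \<noteq> x!(j+e)} \<le> k}"
        by (auto simp: Wk_def W_def chan_inputs_def)
      then show ?thesis using FamY ent by (auto simp: Fam_def)
    qed
    finally have "(\<Sum>y\<in>?Y. if chan_entry n k x y then z y else 0) = (\<Sum>y\<in>f ` Wk. c)" .
    moreover have "card (f ` Wk) = card Wk"
      by (rule card_image, rule inj_on_subset[OF inj]) (auto simp: Wk_def W_def chan_inputs_def)
    ultimately show ?thesis using cWk Vpos by (simp add: c_def)
  qed
  show ?thesis
    apply (rule exI[of _ z])
    using s1 cov by (auto simp: z_def c_def m_def)
qed


theorem lemma6:
  fixes q n a b :: nat
  assumes "q \<ge> 2" and "b \<ge> 1" and "a + q * b + 1 \<le> n"
  shows "kappa_chan q n a b \<le> kappa_chan q n (a + 2) (b - 1)"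
proof -
  have q1: "q \<ge> 1" using assms by simp
  define S where "S e k = {(\<Sum>y\<in>chan_outputs q n e. z y) | z :: nat option list \<Rightarrow> real.
      (\<forall>y\<in>chan_outputs q n e. z y \<ge> 0) \<and> (\<forall>x\<in>chan_inputs q n. (\<Sum>y\<in>chan_outputs q n e. if chan_entry n k x y then z y else 0) \<ge> 1)}" for e k
  have kS: "kappa_chan q n e k = Inf (S e k)" for e k
    by (simp add: kappa_chan_def kappa_star_def S_def)
  have wit: "real (q^(n-e)) / real (Vb q (n-e) k) \<in> S e k" if "e \<le> n" for e k
    using upper_witness[OF that, of q k] unfolding S_def mem_Collect_eq by metis
  have qb: "q*b \<ge> 2" using mult_le_mono[of 2 q 1 b] assms by simp
  have an: "a \<le> n" "a + 2 \<le> n" using assms qb by linarith+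
  define m where "m = n - a"
  define M where "M = m - 2"
  define c where "c = b - 1"
  have mM: "m = Suc (Suc M)" using an by (simp add: m_def M_def)
  have bc: "b = Suc c" using assms by (simp add: c_def)
  have qc: "q * Suc c \<le> M + 1" using assms mM bc by (simp add: m_def)
  have ineq: "q^2 * Vb q M c \<le> Vb q m b" using Vb_ineq[OF q1 qc] mM bc by simp
  have step1: "Inf (S a b) \<le> real (q^m) / real (Vb q m b)"
  proof (rule cInf_lower)
    show "real (q^m) / real (Vb q m b) \<in> S a b" using wit[OF an(1)] by (simp add: m_def)
    show "bdd_below (S a b)"
      by (rule bdd_belowI[of _ 0]) (auto simp: S_def intro: sum_nonneg)
  qed
  have step2: "real (q^M) / real (Vb q M c) \<le> Inf (S (a+2) (b-1))"
  proof (rule cInf_greatest)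
    show "S (a+2) (b-1) \<noteq> {}" using wit[OF an(2)] by blast
    fix s assume "s \<in> S (a+2) (b-1)"
    then obtain z where s: "s = (\<Sum>y\<in>chan_outputs q n (a+2). z y)"
      and nn: "\<forall>y\<in>chan_outputs q n (a+2). z y \<ge> 0"
      and cov: "\<forall>x\<in>chan_inputs q n. (\<Sum>y\<in>chan_outputs q n (a+2). if chan_entry n (b-1) x y then z y else 0) \<ge> 1"
      unfolding S_def by blast
    have "n - (a+2) = M" by (simp add: M_def m_def)
    then show "real (q^M) / real (Vb q M c) \<le> s"
      using lower_bound[OF an(2) q1 nn cov] s by (simp add: c_def)
  qed
  have step3: "real (q^m) / real (Vb q m b) \<le> real (q^M) / real (Vb q M c)"
  proof -
    have p1: "real (Vb q m b) > 0" "real (Vb q M c) > 0" using Vb_pos[of q] by (auto intro: less_le_trans)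
    have "real (q^m) * real (Vb q M c) = real (q^M) * (real (q^2 * Vb q M c))"
      by (simp add: mM power2_eq_square)
    also have "\<dots> \<le> real (q^M) * real (Vb q m b)"
      using mult_left_mono[OF iffD2[OF of_nat_le_iff ineq], of "real (q^M)"] by simp
    finally have "real (q^m) * real (Vb q M c) \<le> real (q^M) * real (Vb q m b)" .
    then show ?thesis using p1 by (simp add: divide_le_eq le_divide_eq mult.commute mult.left_commute)
  qed
  show ?thesis unfolding kS using step1 step2 step3 by linarith
qed

end
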